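(* Let $\alpha=\sqrt{a_{ij}y^iy^j}$ be a Riemannian metric and $\beta=b_iy^i$ a $1$-form on a manifold, with $b=\|\beta\|_\alpha$, satisfying ${}^\alpha R^i{}_j=\mu(\alpha^2\delta^i{}_j-y^iy_j)$ and $b_{i|j}=c(x)a_{ij}$ with $c^2=\kappa-\mu b^2$, where $\mu<0$ and $\kappa=0$. Define $\bar\alpha:=\alpha/b$ and $\bar\beta:=\beta/b^2$. Then ${}^{\bar\alpha}R^i{}_j=0$ and $\bar b_{i|j}=0$. In this case $\bar b=1$.
   Context: ${}^\alpha R^i{}_j$ denotes the Riemann curvature tensor of $\alpha$, $y_j=a_{jk}y^k$, $b_{i|j}$ the covariant derivative of $\beta$ with respect to $\alpha$; ${}^{\bar\alpha}R^i{}_j$ is the Riemann curvature tensor of $\bar\alpha$, $\bar b_{i|j}$ the covariant derivative of $\bar\beta=\bar b_iy^i$ with respect to $\bar\alpha$, and $\bar b=\|\bar\beta\|_{\bar\alpha}$. *)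

theory Defs
  imports "HOL-Analysis.Analysis"
begin

text \<open>Local coordinate rendering of Riemannian data on a chart domain U \<subseteq> R^n.
  Points and tangent vectors are elements of real^'n, indices range over 'n.\<close>

definition pd :: "'n::finite \<Rightarrow> (real^'n \<Rightarrow> real) \<Rightarrow> real^'n \<Rightarrow> real" where
  "pd i f x = deriv (\<lambda>t. f (x + t *\<^sub>R axis i 1)) 0"

fun ipd :: "'n::finite list \<Rightarrow> (real^'n \<Rightarrow> real) \<Rightarrow> real^'n \<Rightarrow> real" where
  "ipd [] f = f"
| "ipd (i # is) f = pd i (ipd is f)"

definition smooth_on :: "(real^'n::finite) set \<Rightarrow> (real^'n \<Rightarrow> real) \<Rightarrow> bool" where
  "smooth_on U f \<longleftrightarrow> (\<forall>is. ipd is f differentiable_on U)"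

definition riem_metric :: "(real^'n::finite) set \<Rightarrow> ('n \<Rightarrow> 'n \<Rightarrow> real^'n \<Rightarrow> real) \<Rightarrow> bool" where
  "riem_metric U a \<longleftrightarrow> open U \<and> (\<forall>i j. smooth_on U (a i j)) \<and>
     (\<forall>x\<in>U. (\<forall>i j. a i j x = a j i x) \<and>
        (\<forall>v::real^'n. v \<noteq> 0 \<longrightarrow> (\<Sum>i\<in>UNIV. \<Sum>j\<in>UNIV. a i j x * v$i * v$j) > 0))"

definition inv_metric :: "('n::finite \<Rightarrow> 'n \<Rightarrow> real^'n \<Rightarrow> real) \<Rightarrow> 'n \<Rightarrow> 'n \<Rightarrow> real^'n \<Rightarrow> real" where
  "inv_metric a i j x = matrix_inv (\<chi> k l. a k l x) $ i $ j"

definition christoffel :: "('n::finite \<Rightarrow> 'n \<Rightarrow> real^'n \<Rightarrow> real) \<Rightarrow> 'n \<Rightarrow> 'n \<Rightarrow> 'n \<Rightarrow> real^'n \<Rightarrow> real" where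
  "christoffel a k i j x = (1/2) * (\<Sum>l\<in>UNIV. inv_metric a k l x *
      (pd i (a j l) x + pd j (a i l) x - pd l (a i j) x))"

text \<open>Riemann tensor R^i_{jkl} with R(d_k,d_l)d_j = R^i_{jkl} d_i\<close>
definition riem_tensor :: "('n::finite \<Rightarrow> 'n \<Rightarrow> real^'n \<Rightarrow> real) \<Rightarrow> 'n \<Rightarrow> 'n \<Rightarrow> 'n \<Rightarrow> 'n \<Rightarrow> real^'n \<Rightarrow> real" where
  "riem_tensor a i j k l x =
     pd k (christoffel a i l j) x - pd l (christoffel a i k j) x
     + (\<Sum>m\<in>UNIV. christoffel a i k m x * christoffel a m l j x
                 - christoffel a i l m x * christoffel a m k j x)"

text \<open>Riemann curvature (as used in Finsler geometry) R^i_k(x,y) = R^i_{jkl} y^j y^l\<close>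
definition riem_curv :: "('n::finite \<Rightarrow> 'n \<Rightarrow> real^'n \<Rightarrow> real) \<Rightarrow> 'n \<Rightarrow> 'n \<Rightarrow> real^'n \<Rightarrow> real^'n \<Rightarrow> real" where
  "riem_curv a i k x y = (\<Sum>j\<in>UNIV. \<Sum>l\<in>UNIV. riem_tensor a i j k l x * y$j * y$l)"

definition alpha_sq :: "('n::finite \<Rightarrow> 'n \<Rightarrow> real^'n \<Rightarrow> real) \<Rightarrow> real^'n \<Rightarrow> real^'n \<Rightarrow> real" where
  "alpha_sq a x y = (\<Sum>i\<in>UNIV. \<Sum>j\<in>UNIV. a i j x * y$i * y$j)"

definition lower :: "('n::finite \<Rightarrow> 'n \<Rightarrow> real^'n \<Rightarrow> real) \<Rightarrow> real^'n \<Rightarrow> real^'n \<Rightarrow> 'n \<Rightarrow> real" where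
  "lower a x y k = (\<Sum>j\<in>UNIV. a k j x * y$j)"

definition cov_deriv :: "('n::finite \<Rightarrow> 'n \<Rightarrow> real^'n \<Rightarrow> real) \<Rightarrow> ('n \<Rightarrow> real^'n \<Rightarrow> real) \<Rightarrow> 'n \<Rightarrow> 'n \<Rightarrow> real^'n \<Rightarrow> real" where
  "cov_deriv a b i j x = pd j (b i) x - (\<Sum>k\<in>UNIV. christoffel a k i j x * b k x)"

definition form_norm :: "('n::finite \<Rightarrow> 'n \<Rightarrow> real^'n \<Rightarrow> real) \<Rightarrow> ('n \<Rightarrow> real^'n \<Rightarrow> real) \<Rightarrow> real^'n \<Rightarrow> real" where
  "form_norm a b x = sqrt (\<Sum>i\<in>UNIV. \<Sum>j\<in>UNIV. inv_metric a i j x * b i x * b j x)"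

end

theory Submission
  imports Defs
begin


lemma pd_hd:
  fixes f :: "real^'n::finite \<Rightarrow> real"
  assumes "(f has_derivative D) (at x)"
  shows "pd i f x = D (axis i 1)"
proof -
  let ?v = "axis i 1 :: real^'n"
  have g: "((\<lambda>t::real. x + t *\<^sub>R ?v) has_derivative (\<lambda>t. t *\<^sub>R ?v)) (at 0)"
    by (auto intro!: derivative_eq_intros)
  have f0: "(f has_derivative D) (at (x + 0 *\<^sub>R ?v))" using assms by simp
  have "((\<lambda>t. f (x + t *\<^sub>R ?v)) has_derivative (\<lambda>t. D (t *\<^sub>R ?v))) (at 0)"
    using has_derivative_compose[OF g f0] by (simp add: o_def)
  moreover have "linear D" using assms has_derivative_linear by blast
  hence "(\<lambda>t. D (t *\<^sub>R ?v)) = (*) (D ?v)"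
    by (auto simp: linear_scale mult.commute)
  ultimately have "((\<lambda>t. f (x + t *\<^sub>R ?v)) has_field_derivative D ?v) (at 0)"
    by (simp add: has_field_derivative_def)
  thus ?thesis unfolding pd_def by (rule DERIV_imp_deriv)
qed

lemma pd_fd:
  fixes f :: "real^'n::finite \<Rightarrow> real"
  assumes "f differentiable (at x)"
  shows "(f has_derivative (frechet_derivative f (at x))) (at x)"
  using assms frechet_derivative_works by blast

lemma pd_add:
  fixes f g :: "real^'n::finite \<Rightarrow> real"
  assumes "f differentiable (at x)" "g differentiable (at x)"
  shows "pd i (\<lambda>y. f y + g y) x = pd i f x + pd i g x"
  using pd_hd[OF has_derivative_add[OF pd_fd[OF assms(1)] pd_fd[OF assms(2)]]]
    pd_hd[OF pd_fd[OF assms(1)]] pd_hd[OF pd_fd[OF assms(2)]] by simp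

lemma pd_diff:
  fixes f g :: "real^'n::finite \<Rightarrow> real"
  assumes "f differentiable (at x)" "g differentiable (at x)"
  shows "pd i (\<lambda>y. f y - g y) x = pd i f x - pd i g x"
  using pd_hd[OF has_derivative_diff[OF pd_fd[OF assms(1)] pd_fd[OF assms(2)]]]
    pd_hd[OF pd_fd[OF assms(1)]] pd_hd[OF pd_fd[OF assms(2)]] by simp

lemma pd_mult:
  fixes f g :: "real^'n::finite \<Rightarrow> real"
  assumes "f differentiable (at x)" "g differentiable (at x)"
  shows "pd i (\<lambda>y. f y * g y) x = pd i f x * g x + f x * pd i g x"
  using pd_hd[OF has_derivative_mult[OF pd_fd[OF assms(1)] pd_fd[OF assms(2)]]]
    pd_hd[OF pd_fd[OF assms(1)]] pd_hd[OF pd_fd[OF assms(2)]] by simp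

lemma pd_const: "pd i (\<lambda>y::real^'n::finite. k) x = 0"
  using pd_hd[OF has_derivative_const, of i k x] by simp

lemma pd_cmult:
  fixes f :: "real^'n::finite \<Rightarrow> real"
  assumes "f differentiable (at x)"
  shows "pd i (\<lambda>y. k * f y) x = k * pd i f x"
  using pd_mult[OF differentiable_const assms, of i k] pd_const[of i k x] by simp

lemma pd_sum:
  fixes f :: "'a \<Rightarrow> real^'n::finite \<Rightarrow> real"
  assumes "finite A" "\<And>a. a \<in> A \<Longrightarrow> f a differentiable (at x)"
  shows "pd i (\<lambda>y. \<Sum>a\<in>A. f a y) x = (\<Sum>a\<in>A. pd i (f a) x)"
proof -
  have "((\<lambda>y. \<Sum>a\<in>A. f a y) has_derivative (\<lambda>h. \<Sum>a\<in>A. frechet_derivative (f a) (at x) h)) (at x)"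
    by (rule has_derivative_sum) (use assms pd_fd in blast)
  from pd_hd[OF this] show ?thesis using pd_hd[OF pd_fd[OF assms(2)]] by simp
qed

lemma pd_inverse:
  fixes f :: "real^'n::finite \<Rightarrow> real"
  assumes "f differentiable (at x)" "f x \<noteq> 0"
  shows "pd i (\<lambda>y. inverse (f y)) x = - pd i f x / (f x)^2"
proof -
  have "((\<lambda>y. inverse (f y)) has_derivative (\<lambda>h. - (inverse (f x) * frechet_derivative f (at x) h * inverse (f x)))) (at x)"
    by (rule Deriv.has_derivative_inverse[OF assms(2) pd_fd[OF assms(1)]])
  from pd_hd[OF this] show ?thesis using pd_hd[OF pd_fd[OF assms(1)]]
    by (simp add: field_simps power2_eq_square)
qed

lemma pd_cong:
  fixes f g :: "real^'n::finite \<Rightarrow> real"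
  assumes "open U" "x \<in> U" "\<And>y. y \<in> U \<Longrightarrow> f y = g y"
  shows "pd i f x = pd i g x"
proof -
  let ?v = "axis i 1 :: real^'n"
  have "open ((\<lambda>t::real. x + t *\<^sub>R ?v) -` U)"
    by (rule continuous_open_vimage[OF assms(1)]) (auto intro!: continuous_intros)
  moreover have "0 \<in> (\<lambda>t::real. x + t *\<^sub>R ?v) -` U" using assms(2) by simp
  ultimately have "eventually (\<lambda>t. x + t *\<^sub>R ?v \<in> U) (nhds 0)"
    unfolding eventually_nhds by (intro exI[of _ "(\<lambda>t::real. x + t *\<^sub>R ?v) -` U"]) auto
  hence "eventually (\<lambda>t. f (x + t *\<^sub>R ?v) = g (x + t *\<^sub>R ?v)) (nhds 0)"
    by (rule eventually_mono) (use assms(3) in auto)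
  thus ?thesis unfolding pd_def by (rule deriv_cong_ev) simp
qed

lemma diff_transfer:
  fixes f g :: "real^'n::finite \<Rightarrow> real"
  assumes "g differentiable (at x)" "open U" "x \<in> U" "\<And>y. y \<in> U \<Longrightarrow> g y = f y"
  shows "f differentiable (at x)"
  using assms unfolding differentiable_def
  by (meson has_derivative_transform_within_open)

lemma differentiable_prod':
  fixes f :: "'a \<Rightarrow> real^'n::finite \<Rightarrow> real"
  assumes "\<And>a. a \<in> A \<Longrightarrow> f a differentiable (at x)"
  shows "(\<lambda>y. \<Prod>a\<in>A. f a y) differentiable (at x)"
proof -
  from assms have "\<forall>a\<in>A. \<exists>D. (f a has_derivative D) (at x)" unfolding differentiable_def by blast
  from bchoice[OF this] obtain D where D: "\<forall>a\<in>A. (f a has_derivative D a) (at x)" by blast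
  have "((\<lambda>y. \<Prod>a\<in>A. f a y) has_derivative (\<lambda>h. \<Sum>i\<in>A. D i h * (\<Prod>j\<in>A - {i}. f j x))) (at x)"
    by (rule has_derivative_prod) (use D in blast)
  thus ?thesis unfolding differentiable_def by blast
qed

lemma det_differentiable:
  fixes M :: "real^'n::finite \<Rightarrow> real^'m::finite^'m"
  assumes "\<And>i j. (\<lambda>y. M y $ i $ j) differentiable (at x)"
  shows "(\<lambda>y. det (M y)) differentiable (at x)"
  unfolding det_def
proof (rule differentiable_sum)
  show "finite {p. p permutes (UNIV::'m set)}" by (simp add: finite_permutations)
  show "\<forall>p\<in>{p. p permutes (UNIV::'m set)}. (\<lambda>y. of_int (sign p) * (\<Prod>i\<in>UNIV. M y $ i $ p i)) differentiable (at x)"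
  proof
    fix p show "(\<lambda>y. of_int (sign p) * (\<Prod>i\<in>UNIV. M y $ i $ p i)) differentiable (at x)"
      by (rule differentiable_mult[OF differentiable_const differentiable_prod'[OF assms]])
  qed
qed



lemma sum_swap23: "(\<Sum>i\<in>A. \<Sum>j\<in>B. \<Sum>k\<in>C. F i j k) = (\<Sum>i\<in>A. \<Sum>k\<in>C. \<Sum>j\<in>B. F i j k)"
  by (rule sum.cong[OF refl]) (rule sum.swap)

lemma delta_sum1 [simp]: "(\<Sum>j\<in>UNIV. (if i = j then (1::real) else 0) * f j) = f i" for f :: "'n::finite \<Rightarrow> real"
proof -
  have "(\<Sum>j\<in>UNIV. (if i = j then (1::real) else 0) * f j) = (\<Sum>j\<in>UNIV. if i = j then f j else 0)"
    by (rule sum.cong) auto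
  thus ?thesis by simp
qed
lemma delta_sum2 [simp]: "(\<Sum>j\<in>UNIV. f j * (if i = j then (1::real) else 0)) = f i" for f :: "'n::finite \<Rightarrow> real"
proof -
  have "(\<Sum>j\<in>UNIV. f j * (if i = j then (1::real) else 0)) = (\<Sum>j\<in>UNIV. if i = j then f j else 0)"
    by (rule sum.cong) auto
  thus ?thesis by simp
qed
lemma delta_sum3 [simp]: "(\<Sum>j\<in>UNIV. (if j = i then (1::real) else 0) * f j) = f i" for f :: "'n::finite \<Rightarrow> real"
proof -
  have "(\<Sum>j\<in>UNIV. (if j = i then (1::real) else 0) * f j) = (\<Sum>j\<in>UNIV. if j = i then f j else 0)"
    by (rule sum.cong) auto
  thus ?thesis by simp
qed
lemma delta_sum4 [simp]: "(\<Sum>j\<in>UNIV. f j * (if j = i then (1::real) else 0)) = f i" for f :: "'n::finite \<Rightarrow> real"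
proof -
  have "(\<Sum>j\<in>UNIV. f j * (if j = i then (1::real) else 0)) = (\<Sum>j\<in>UNIV. if j = i then f j else 0)"
    by (rule sum.cong) auto
  thus ?thesis by simp
qed

locale L =
  fixes U :: "(real^'n::finite) set"
    and a :: "'n \<Rightarrow> 'n \<Rightarrow> real^'n \<Rightarrow> real"
    and b :: "'n \<Rightarrow> real^'n \<Rightarrow> real"
    and c :: "real^'n \<Rightarrow> real"
    and \<mu> :: real
  assumes metric: "riem_metric U a"
    and smooth_b: "\<forall>i. smooth_on U (b i)"
    and nonzero: "\<forall>x\<in>U. form_norm a b x > 0"
    and cov: "\<forall>x\<in>U. \<forall>i j. cov_deriv a b i j x = c x * a i j x"
    and cc: "\<forall>x\<in>U. (c x)\<^sup>2 = - \<mu> * (form_norm a b x)\<^sup>2"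
    and mu_neg: "\<mu> < 0"
begin

lemma openU: "open U" using metric unfolding riem_metric_def by auto

lemma asym: "x \<in> U \<Longrightarrow> a i j x = a j i x" using metric unfolding riem_metric_def by auto

lemma posdef: "x \<in> U \<Longrightarrow> v \<noteq> 0 \<Longrightarrow> (\<Sum>i\<in>UNIV. \<Sum>j\<in>UNIV. a i j x * v$i * v$j) > 0"
  using metric unfolding riem_metric_def by auto

lemma smooth_diff:
  assumes "smooth_on U f" "x \<in> U"
  shows "f differentiable (at x)" "pd k f differentiable (at x)"
proof -
  have "ipd [] f differentiable_on U" "ipd [k] f differentiable_on U"
    using assms(1) unfolding smooth_on_def by blast+
  thus "f differentiable (at x)" "pd k f differentiable (at x)"
    using assms(2) openU differentiable_on_eq_differentiable_at by auto
qed

lemma a_d: "x \<in> U \<Longrightarrow> a i j differentiable (at x)"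
  using metric smooth_diff unfolding riem_metric_def by blast
lemma pa_d: "x \<in> U \<Longrightarrow> pd k (a i j) differentiable (at x)"
  using metric smooth_diff unfolding riem_metric_def by blast
lemma b_d: "x \<in> U \<Longrightarrow> b i differentiable (at x)"
  using smooth_b smooth_diff by blast
lemma pb_d: "x \<in> U \<Longrightarrow> pd k (b i) differentiable (at x)"
  using smooth_b smooth_diff by blast

definition Amat :: "real^'n \<Rightarrow> real^'n^'n" where "Amat x = (\<chi> k l. a k l x)"

lemma Amat_inv: assumes "x \<in> U" shows "invertible (Amat x)"
proof -
  have "\<forall>v. Amat x *v v = 0 \<longrightarrow> v = 0"
  proof (intro allI impI)
    fix v assume h: "Amat x *v v = 0"
    show "v = 0"
    proof (rule ccontr)
      assume "v \<noteq> 0"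
      hence "(\<Sum>i\<in>UNIV. \<Sum>j\<in>UNIV. a i j x * v$i * v$j) > 0" using posdef assms by blast
      moreover have "(\<Sum>i\<in>UNIV. \<Sum>j\<in>UNIV. a i j x * v$i * v$j) = (\<Sum>i\<in>UNIV. v$i * (Amat x *v v)$i)"
        by (simp add: Amat_def matrix_vector_mult_def sum_distrib_left mult_ac)
      ultimately show False using h by simp
    qed
  qed
  thus ?thesis unfolding invertible_left_inverse matrix_left_invertible_ker by blast
qed

lemma matrix_inv_props:
  fixes A :: "real^'n^'n"
  assumes "invertible A"
  shows "A ** matrix_inv A = mat 1" "matrix_inv A ** A = mat 1"
proof -
  have "\<exists>A'. A ** A' = mat 1 \<and> A' ** A = mat 1" using assms unfolding invertible_def by blast
  from someI_ex[OF this] show "A ** matrix_inv A = mat 1" "matrix_inv A ** A = mat 1"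
    unfolding matrix_inv_def by auto
qed

lemma inv_eq: "inv_metric a k l x = matrix_inv (Amat x) $ k $ l"
  unfolding inv_metric_def Amat_def ..

lemma I1: assumes "x \<in> U"
  shows "(\<Sum>l\<in>UNIV. inv_metric a k l x * a l m x) = (if k = m then 1 else 0)"
proof -
  have "(matrix_inv (Amat x) ** Amat x) $ k $ m = (if k = m then 1 else 0)"
    using matrix_inv_props(2)[OF Amat_inv[OF assms]] by (simp add: mat_def)
  thus ?thesis by (simp add: matrix_matrix_mult_def inv_eq Amat_def)
qed

lemma I2: assumes "x \<in> U"
  shows "(\<Sum>l\<in>UNIV. a k l x * inv_metric a l m x) = (if k = m then 1 else 0)"
proof -
  have "(Amat x ** matrix_inv (Amat x)) $ k $ m = (if k = m then 1 else 0)"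
    using matrix_inv_props(1)[OF Amat_inv[OF assms]] by (simp add: mat_def)
  thus ?thesis by (simp add: matrix_matrix_mult_def inv_eq Amat_def)
qed

lemma inv_cramer: assumes "x \<in> U"
  shows "inv_metric a k l x = det (\<chi> i j. if j = k then axis l 1 $ i else Amat x $ i $ j) / det (Amat x)"
proof -
  let ?A = "Amat x" and ?B = "matrix_inv (Amat x)"
  have d: "det ?A \<noteq> 0" using Amat_inv[OF assms] invertible_det_nz by blast
  have "?A *v (?B *v axis l 1) = axis l 1"
    by (simp add: matrix_vector_mul_assoc matrix_inv_props(1)[OF Amat_inv[OF assms]])
  hence "?B *v axis l 1 = (\<chi> k. det (\<chi> i j. if j = k then axis l 1 $ i else ?A $ i $ j) / det ?A)"
    using cramer[OF d] by blast
  hence "(?B *v axis l 1) $ k = det (\<chi> i j. if j = k then axis l 1 $ i else ?A $ i $ j) / det ?A"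
    by simp
  moreover have "(?B *v axis l 1) $ k = ?B $ k $ l"
    by (simp add: matrix_vector_mult_def axis_def if_distrib cong: if_cong)
  ultimately show ?thesis by (simp add: inv_eq)
qed

lemma inv_d: assumes "x \<in> U" shows "inv_metric a k l differentiable (at x)"
proof -
  let ?g = "\<lambda>y. det (\<chi> i j. if j = k then axis l 1 $ i else Amat y $ i $ j) / det (Amat y)"
  have "(\<lambda>y. det (\<chi> i j. if j = k then axis l 1 $ i else Amat y $ i $ j)) differentiable (at x)"
    apply (rule det_differentiable)
    subgoal for i j by (cases "j = k") (simp_all add: Amat_def a_d[OF assms])
    done
  moreover have "(\<lambda>y. det (Amat y)) differentiable (at x)"
    by (rule det_differentiable) (auto simp: Amat_def a_d[OF assms])
  moreover have "det (Amat x) \<noteq> 0" using Amat_inv[OF assms] invertible_det_nz by blast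
  ultimately have "?g differentiable (at x)" by (rule differentiable_divide)
  thus ?thesis by (rule diff_transfer[OF _ openU assms]) (simp add: inv_cramer)
qed

end


context L begin

abbreviation G where "G k i j x \<equiv> christoffel a k i j x"
abbreviation iv where "iv i j x \<equiv> inv_metric a i j x"

lemma G_eq: "christoffel a k i j = (\<lambda>x. (1/2) * (\<Sum>l\<in>UNIV. iv k l x *
      (pd i (a j l) x + pd j (a i l) x - pd l (a i j) x)))"
  by (rule ext) (simp add: christoffel_def)

lemma G_d: assumes "x \<in> U" shows "christoffel a k i j differentiable (at x)"
  unfolding G_eq
  by (intro differentiable_mult differentiable_const differentiable_sum ballI
      differentiable_add differentiable_diff inv_d[OF assms] pa_d[OF assms]) auto

lemma pd_asym: "x \<in> U \<Longrightarrow> pd k (a i j) x = pd k (a j i) x"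
  by (rule pd_cong[OF openU]) (auto simp: asym)

lemma G_sym: "x \<in> U \<Longrightarrow> G k i j x = G k j i x"
  unfolding christoffel_def by (simp add: pd_asym algebra_simps)

lemma contract_inv: assumes "x \<in> U"
  shows "(\<Sum>m\<in>UNIV. (\<Sum>l\<in>UNIV. iv m l x * E l) * a m q x) = E q"
proof -
  have "(\<Sum>m\<in>UNIV. (\<Sum>l\<in>UNIV. iv m l x * E l) * a m q x)
      = (\<Sum>m\<in>UNIV. \<Sum>l\<in>UNIV. a q m x * iv m l x * E l)"
    by (rule sum.cong[OF refl]) (simp add: sum_distrib_right sum_distrib_left asym[OF assms, of _ q] mult_ac)
  also have "\<dots> = (\<Sum>l\<in>UNIV. \<Sum>m\<in>UNIV. a q m x * iv m l x * E l)" by (rule sum.swap)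
  also have "\<dots> = (\<Sum>l\<in>UNIV. (\<Sum>m\<in>UNIV. a q m x * iv m l x) * E l)"
    by (simp add: sum_distrib_right)
  also have "\<dots> = E q" by (simp add: I2[OF assms])
  finally show ?thesis .
qed

lemma contract_inv2: assumes "x \<in> U"
  shows "(\<Sum>m\<in>UNIV. iv i m x * (\<Sum>l\<in>UNIV. a m l x * F l)) = F i"
proof -
  have "(\<Sum>m\<in>UNIV. iv i m x * (\<Sum>l\<in>UNIV. a m l x * F l))
      = (\<Sum>m\<in>UNIV. \<Sum>l\<in>UNIV. iv i m x * a m l x * F l)"
    by (simp add: sum_distrib_left mult_ac)
  also have "\<dots> = (\<Sum>l\<in>UNIV. \<Sum>m\<in>UNIV. iv i m x * a m l x * F l)" by (rule sum.swap)
  also have "\<dots> = (\<Sum>l\<in>UNIV. (\<Sum>m\<in>UNIV. iv i m x * a m l x) * F l)"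
    by (simp add: sum_distrib_right)
  also have "\<dots> = F i" by (simp add: I1[OF assms])
  finally show ?thesis .
qed

lemma G_lower: assumes "x \<in> U"
  shows "(\<Sum>m\<in>UNIV. G m k p x * a m q x) = (1/2) * (pd k (a p q) x + pd p (a k q) x - pd q (a k p) x)"
proof -
  have "(\<Sum>m\<in>UNIV. G m k p x * a m q x) = (1/2) * (\<Sum>m\<in>UNIV. (\<Sum>l\<in>UNIV. iv m l x *
      (pd k (a p l) x + pd p (a k l) x - pd l (a k p) x)) * a m q x)"
    by (simp add: christoffel_def sum_distrib_left mult_ac)
  also have "\<dots> = (1/2) * (pd k (a p q) x + pd p (a k q) x - pd q (a k p) x)"
    by (simp only: contract_inv[OF assms])
  finally show ?thesis .
qed

lemma compat: assumes "x \<in> U"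
  shows "pd k (a p q) x = (\<Sum>m\<in>UNIV. G m k p x * a m q x + G m k q x * a p m x)"
proof -
  have "(\<Sum>m\<in>UNIV. G m k q x * a p m x) = (\<Sum>m\<in>UNIV. G m k q x * a m p x)"
    by (rule sum.cong[OF refl]) (simp add: asym[OF assms, of p])
  also have "\<dots> = (1/2) * (pd k (a q p) x + pd q (a k p) x - pd p (a k q) x)"
    by (rule G_lower[OF assms])
  finally have 1: "(\<Sum>m\<in>UNIV. G m k q x * a p m x) = (1/2) * (pd k (a q p) x + pd q (a k p) x - pd p (a k q) x)" .
  have 2: "(\<Sum>m\<in>UNIV. G m k p x * a m q x) = (1/2) * (pd k (a p q) x + pd p (a k q) x - pd q (a k p) x)"
    by (rule G_lower[OF assms])
  have "(\<Sum>m\<in>UNIV. G m k p x * a m q x + G m k q x * a p m x)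
      = (\<Sum>m\<in>UNIV. G m k p x * a m q x) + (\<Sum>m\<in>UNIV. G m k q x * a p m x)"
    by (rule sum.distrib)
  also have "\<dots> = pd k (a p q) x"
    unfolding 1 2 using pd_asym[OF assms, of k q p] by (simp add: field_simps)
  finally show ?thesis by simp
qed

end


context L begin

lemma dinv0: assumes "x \<in> U"
  shows "(\<Sum>l\<in>UNIV. pd k (a m l) x * iv l j x + a m l x * pd k (inv_metric a l j) x) = 0"
proof -
  have "pd k (\<lambda>y. \<Sum>l\<in>UNIV. a m l y * iv l j y) x = pd k (\<lambda>y. if m = j then 1 else 0) x"
    by (rule pd_cong[OF openU assms]) (simp add: I2)
  also have "\<dots> = 0" by (rule pd_const)
  finally have "pd k (\<lambda>y. \<Sum>l\<in>UNIV. a m l y * iv l j y) x = 0" .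
  moreover have "pd k (\<lambda>y. \<Sum>l\<in>UNIV. a m l y * iv l j y) x
     = (\<Sum>l\<in>UNIV. pd k (\<lambda>y. a m l y * iv l j y) x)"
    by (rule pd_sum) (auto intro!: differentiable_mult a_d[OF assms] inv_d[OF assms])
  moreover have "\<And>l. pd k (\<lambda>y. a m l y * iv l j y) x = pd k (a m l) x * iv l j x + a m l x * pd k (inv_metric a l j) x"
    by (rule pd_mult[OF a_d[OF assms] inv_d[OF assms]])
  ultimately show ?thesis by simp
qed

lemma dinv1: assumes "x \<in> U"
  shows "pd k (inv_metric a i j) x = - (\<Sum>m\<in>UNIV. \<Sum>l\<in>UNIV. iv i m x * pd k (a m l) x * iv l j x)"
proof -
  have "pd k (inv_metric a i j) x = (\<Sum>m\<in>UNIV. iv i m x * (\<Sum>l\<in>UNIV. a m l x * pd k (inv_metric a l j) x))"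
    by (rule contract_inv2[OF assms, symmetric])
  also have "\<dots> = (\<Sum>m\<in>UNIV. iv i m x * (- (\<Sum>l\<in>UNIV. pd k (a m l) x * iv l j x)))"
  proof (rule sum.cong[OF refl])
    fix m
    have "(\<Sum>l\<in>UNIV. a m l x * pd k (inv_metric a l j) x) = - (\<Sum>l\<in>UNIV. pd k (a m l) x * iv l j x)"
      using dinv0[OF assms, of k m j] by (simp add: sum.distrib eq_neg_iff_add_eq_0 add.commute)
    thus "iv i m x * (\<Sum>l\<in>UNIV. a m l x * pd k (inv_metric a l j) x) =
        iv i m x * (- (\<Sum>l\<in>UNIV. pd k (a m l) x * iv l j x))" by simp
  qed
  also have "\<dots> = - (\<Sum>m\<in>UNIV. \<Sum>l\<in>UNIV. iv i m x * pd k (a m l) x * iv l j x)"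
    by (simp add: sum_distrib_left sum_negf mult.assoc)
  finally show ?thesis .
qed

lemma dinv: assumes "x \<in> U"
  shows "pd k (inv_metric a i j) x = - (\<Sum>p\<in>UNIV. iv i p x * G j k p x + G i k p x * iv p j x)"
proof -
  have A: "(\<Sum>m\<in>UNIV. \<Sum>l\<in>UNIV. \<Sum>p\<in>UNIV. iv i m x * G p k m x * a p l x * iv l j x)
         = (\<Sum>m\<in>UNIV. iv i m x * G j k m x)"
  proof -
    have "(\<Sum>m\<in>UNIV. \<Sum>l\<in>UNIV. \<Sum>p\<in>UNIV. iv i m x * G p k m x * a p l x * iv l j x)
       = (\<Sum>m\<in>UNIV. \<Sum>p\<in>UNIV. \<Sum>l\<in>UNIV. iv i m x * G p k m x * a p l x * iv l j x)"
      by (rule sum_swap23)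
    also have "\<dots> = (\<Sum>m\<in>UNIV. \<Sum>p\<in>UNIV. iv i m x * G p k m x * (\<Sum>l\<in>UNIV. a p l x * iv l j x))"
      by (simp add: sum_distrib_left mult.assoc)
    also have "\<dots> = (\<Sum>m\<in>UNIV. iv i m x * G j k m x)"
      by (simp add: I2[OF assms])
    finally show ?thesis .
  qed
  have B: "(\<Sum>m\<in>UNIV. \<Sum>l\<in>UNIV. \<Sum>p\<in>UNIV. iv i m x * G p k l x * a m p x * iv l j x)
         = (\<Sum>l\<in>UNIV. G i k l x * iv l j x)"
  proof -
    have "(\<Sum>m\<in>UNIV. \<Sum>l\<in>UNIV. \<Sum>p\<in>UNIV. iv i m x * G p k l x * a m p x * iv l j x)
       = (\<Sum>l\<in>UNIV. \<Sum>m\<in>UNIV. \<Sum>p\<in>UNIV. iv i m x * G p k l x * a m p x * iv l j x)"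
      by (rule sum.swap)
    also have "\<dots> = (\<Sum>l\<in>UNIV. \<Sum>p\<in>UNIV. \<Sum>m\<in>UNIV. iv i m x * G p k l x * a m p x * iv l j x)"
      by (rule sum_swap23)
    also have "\<dots> = (\<Sum>l\<in>UNIV. \<Sum>p\<in>UNIV. (\<Sum>m\<in>UNIV. iv i m x * a m p x) * (G p k l x * iv l j x))"
      by (simp add: sum_distrib_right sum_distrib_left mult_ac)
    also have "\<dots> = (\<Sum>l\<in>UNIV. G i k l x * iv l j x)"
      by (simp add: I1[OF assms])
    finally show ?thesis .
  qed
  have "pd k (inv_metric a i j) x = - (\<Sum>m\<in>UNIV. \<Sum>l\<in>UNIV. iv i m x *
      (\<Sum>p\<in>UNIV. G p k m x * a p l x + G p k l x * a m p x) * iv l j x)"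
    unfolding dinv1[OF assms] by (simp only: compat[OF assms])
  also have "\<dots> = - ((\<Sum>m\<in>UNIV. \<Sum>l\<in>UNIV. \<Sum>p\<in>UNIV. iv i m x * G p k m x * a p l x * iv l j x)
      + (\<Sum>m\<in>UNIV. \<Sum>l\<in>UNIV. \<Sum>p\<in>UNIV. iv i m x * G p k l x * a m p x * iv l j x))"
  proof -
    have "\<And>m l. iv i m x * (\<Sum>p\<in>UNIV. G p k m x * a p l x + G p k l x * a m p x) * iv l j x
      = (\<Sum>p\<in>UNIV. iv i m x * G p k m x * a p l x * iv l j x) + (\<Sum>p\<in>UNIV. iv i m x * G p k l x * a m p x * iv l j x)"
      by (simp add: sum_distrib_left sum_distrib_right sum.distrib distrib_left distrib_right mult.assoc)
    thus ?thesis by (simp only: sum.distrib)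
  qed
  also have "\<dots> = - (\<Sum>p\<in>UNIV. iv i p x * G j k p x + G i k p x * iv p j x)"
    by (simp only: A B sum.distrib)
  finally show ?thesis .
qed

end


lemma gamma_cancel1:
  fixes A H :: "'n::finite \<Rightarrow> 'n \<Rightarrow> real" and b :: "'n \<Rightarrow> real"
  shows "(\<Sum>i\<in>UNIV. \<Sum>j\<in>UNIV. \<Sum>p\<in>UNIV. A i p * H j p * b i * b j)
       = (\<Sum>i\<in>UNIV. \<Sum>j\<in>UNIV. A i j * b i * (\<Sum>m\<in>UNIV. H m j * b m))"
proof -
  have "(\<Sum>i\<in>UNIV. \<Sum>j\<in>UNIV. \<Sum>p\<in>UNIV. A i p * H j p * b i * b j)
      = (\<Sum>i\<in>UNIV. \<Sum>p\<in>UNIV. \<Sum>j\<in>UNIV. A i p * H j p * b i * b j)" by (rule sum_swap23)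
  also have "\<dots> = (\<Sum>i\<in>UNIV. \<Sum>j\<in>UNIV. A i j * b i * (\<Sum>m\<in>UNIV. H m j * b m))"
    by (simp add: sum_distrib_left mult_ac)
  finally show ?thesis .
qed

lemma gamma_cancel2:
  fixes A H :: "'n::finite \<Rightarrow> 'n \<Rightarrow> real" and b :: "'n \<Rightarrow> real"
  shows "(\<Sum>i\<in>UNIV. \<Sum>j\<in>UNIV. \<Sum>p\<in>UNIV. H i p * A p j * b i * b j)
       = (\<Sum>i\<in>UNIV. \<Sum>j\<in>UNIV. A i j * (\<Sum>m\<in>UNIV. H m i * b m) * b j)"
proof -
  have "(\<Sum>i\<in>UNIV. \<Sum>j\<in>UNIV. \<Sum>p\<in>UNIV. H i p * A p j * b i * b j)
      = (\<Sum>j\<in>UNIV. \<Sum>i\<in>UNIV. \<Sum>p\<in>UNIV. H i p * A p j * b i * b j)" by (rule sum.swap)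
  also have "\<dots> = (\<Sum>j\<in>UNIV. \<Sum>p\<in>UNIV. \<Sum>i\<in>UNIV. H i p * A p j * b i * b j)"
    by (rule sum_swap23)
  also have "\<dots> = (\<Sum>p\<in>UNIV. \<Sum>j\<in>UNIV. \<Sum>i\<in>UNIV. H i p * A p j * b i * b j)"
    by (rule sum.swap)
  also have "\<dots> = (\<Sum>i\<in>UNIV. \<Sum>j\<in>UNIV. A i j * (\<Sum>m\<in>UNIV. H m i * b m) * b j)"
    by (simp add: sum_distrib_left sum_distrib_right mult_ac)
  finally show ?thesis .
qed

context L begin

definition Q where "Q x = (\<Sum>i\<in>UNIV. \<Sum>j\<in>UNIV. iv i j x * b i x * b j x)"

lemma Q_d: assumes "x \<in> U" shows "Q differentiable (at x)"
proof -
  have "(\<lambda>y. \<Sum>i\<in>UNIV. \<Sum>j\<in>UNIV. iv i j y * b i y * b j y) differentiable (at x)"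
    by (intro differentiable_sum ballI differentiable_mult inv_d[OF assms] b_d[OF assms]) auto
  thus ?thesis by (simp add: Q_def[abs_def])
qed

lemma fn_Q: "form_norm a b x = sqrt (Q x)"
  unfolding form_norm_def Q_def ..

lemma Q_pos: "x \<in> U \<Longrightarrow> Q x > 0"
  using nonzero fn_Q by (metis real_sqrt_gt_0_iff)

lemma fn_sq: "x \<in> U \<Longrightarrow> (form_norm a b x)\<^sup>2 = Q x"
  by (simp add: fn_Q Q_pos less_imp_le)

lemma cQ: "x \<in> U \<Longrightarrow> (c x)\<^sup>2 = - \<mu> * Q x"
  using cc fn_sq by auto

lemma c_ne: "x \<in> U \<Longrightarrow> c x \<noteq> 0"
proof
  assume x: "x \<in> U" and c0: "c x = 0"
  have "- \<mu> * Q x = 0" using cQ[OF x] c0 by simp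
  moreover have "- \<mu> * Q x > 0" using mult_neg_pos[OF mu_neg Q_pos[OF x]] by simp
  ultimately show False by linarith
qed

lemma db: assumes "x \<in> U"
  shows "pd k (b i) x = c x * a i k x + (\<Sum>m\<in>UNIV. G m i k x * b m x)"
proof -
  have "pd k (b i) x - (\<Sum>m\<in>UNIV. G m i k x * b m x) = c x * a i k x"
    using cov assms unfolding cov_deriv_def by blast
  thus ?thesis by linarith
qed

lemma dQ: assumes "x \<in> U" shows "pd k Q x = 2 * c x * b k x"
proof -
  have d3: "\<And>i j. pd k (\<lambda>y. iv i j y * b i y * b j y) x =
      pd k (inv_metric a i j) x * b i x * b j x + iv i j x * pd k (b i) x * b j x + iv i j x * b i x * pd k (b j) x"
  proof -
    fix i j
    have "pd k (\<lambda>y. iv i j y * b i y * b j y) x = pd k (\<lambda>y. iv i j y * b i y) x * b j x + iv i j x * b i x * pd k (b j) x"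
      by (rule pd_mult) (auto intro!: differentiable_mult inv_d[OF assms] b_d[OF assms])
    also have "pd k (\<lambda>y. iv i j y * b i y) x = pd k (inv_metric a i j) x * b i x + iv i j x * pd k (b i) x"
      by (rule pd_mult[OF inv_d[OF assms] b_d[OF assms]])
    finally show "?thesis i j" by (simp add: algebra_simps)
  qed
  have "pd k Q x = (\<Sum>i\<in>UNIV. pd k (\<lambda>y. \<Sum>j\<in>UNIV. iv i j y * b i y * b j y) x)"
    unfolding Q_def[abs_def]
    by (rule pd_sum) (auto intro!: differentiable_sum differentiable_mult inv_d[OF assms] b_d[OF assms])
  also have "\<dots> = (\<Sum>i\<in>UNIV. \<Sum>j\<in>UNIV. pd k (\<lambda>y. iv i j y * b i y * b j y) x)"
    by (rule sum.cong[OF refl], rule pd_sum) (auto intro!: differentiable_mult inv_d[OF assms] b_d[OF assms])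
  also have "\<dots> = (\<Sum>i\<in>UNIV. \<Sum>j\<in>UNIV.
      pd k (inv_metric a i j) x * b i x * b j x + iv i j x * pd k (b i) x * b j x + iv i j x * b i x * pd k (b j) x)"
    by (simp only: d3)
  also have "\<dots> = - (\<Sum>i\<in>UNIV. \<Sum>j\<in>UNIV. \<Sum>p\<in>UNIV. iv i p x * G j k p x * b i x * b j x)
     - (\<Sum>i\<in>UNIV. \<Sum>j\<in>UNIV. \<Sum>p\<in>UNIV. G i k p x * iv p j x * b i x * b j x)
     + (\<Sum>i\<in>UNIV. \<Sum>j\<in>UNIV. iv i j x * (\<Sum>m\<in>UNIV. G m k i x * b m x) * b j x)
     + (\<Sum>i\<in>UNIV. \<Sum>j\<in>UNIV. iv i j x * b i x * (\<Sum>m\<in>UNIV. G m k j x * b m x))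
     + c x * (\<Sum>i\<in>UNIV. \<Sum>j\<in>UNIV. iv i j x * a i k x * b j x)
     + c x * (\<Sum>i\<in>UNIV. \<Sum>j\<in>UNIV. iv i j x * b i x * a j k x)"
    by (simp add: dinv[OF assms] db[OF assms] G_sym[OF assms, of _ _ k] sum.distrib sum_subtractf
        sum_distrib_left sum_distrib_right algebra_simps)
  also have "\<dots> = c x * (\<Sum>i\<in>UNIV. \<Sum>j\<in>UNIV. iv i j x * a i k x * b j x)
     + c x * (\<Sum>i\<in>UNIV. \<Sum>j\<in>UNIV. iv i j x * b i x * a j k x)"
    using gamma_cancel1[of "\<lambda>i j. iv i j x" "\<lambda>j p. G j k p x" "\<lambda>i. b i x"]
      gamma_cancel2[of "\<lambda>i p. G i k p x" "\<lambda>i j. iv i j x" "\<lambda>i. b i x"]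
    by simp
  also have "(\<Sum>i\<in>UNIV. \<Sum>j\<in>UNIV. iv i j x * a i k x * b j x) = b k x"
  proof -
    have "(\<Sum>i\<in>UNIV. \<Sum>j\<in>UNIV. iv i j x * a i k x * b j x) = (\<Sum>j\<in>UNIV. \<Sum>i\<in>UNIV. a k i x * iv i j x * b j x)"
      by (subst sum.swap) (simp add: asym[OF assms, of _ k] mult_ac)
    also have "\<dots> = (\<Sum>j\<in>UNIV. (\<Sum>i\<in>UNIV. a k i x * iv i j x) * b j x)" by (simp add: sum_distrib_right)
    also have "\<dots> = b k x" by (simp add: I2[OF assms])
    finally show ?thesis .
  qed
  also have "(\<Sum>i\<in>UNIV. \<Sum>j\<in>UNIV. iv i j x * b i x * a j k x) = b k x"
  proof -
    have "(\<Sum>i\<in>UNIV. \<Sum>j\<in>UNIV. iv i j x * b i x * a j k x) = (\<Sum>i\<in>UNIV. b i x * (\<Sum>j\<in>UNIV. iv i j x * a j k x))"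
      by (simp add: sum_distrib_left mult_ac)
    also have "\<dots> = b k x" by (simp add: I1[OF assms])
    finally show ?thesis .
  qed
  finally show ?thesis by simp
qed

end


lemma pd_uminus:
  fixes f :: "real^'n::finite \<Rightarrow> real"
  assumes "f differentiable (at x)"
  shows "pd i (\<lambda>y. - f y) x = - pd i f x"
  using pd_hd[OF has_derivative_minus[OF pd_fd[OF assms]]] pd_hd[OF pd_fd[OF assms]] by simp

context L begin

lemma a_diag_pos: assumes "x \<in> U" shows "a i i x > 0"
proof -
  have "axis i (1::real) $ i = 1" by (simp add: axis_def)
  hence "axis i (1::real) \<noteq> 0" by auto
  from posdef[OF assms this]
  have "(\<Sum>i'\<in>UNIV. \<Sum>j\<in>UNIV. a i' j x * axis i 1 $ i' * axis i 1 $ j) > 0" .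
  moreover have "(\<Sum>i'\<in>UNIV. \<Sum>j\<in>UNIV. a i' j x * axis i (1::real) $ i' * axis i 1 $ j) = a i i x"
    by (simp add: axis_def)
  ultimately show ?thesis by simp
qed

lemma cov_eq: "cov_deriv a b i j = (\<lambda>y. pd j (b i) y - (\<Sum>k\<in>UNIV. G k i j y * b k y))"
  by (rule ext) (simp add: cov_deriv_def)

lemma cov_d: assumes "x \<in> U" shows "cov_deriv a b i j differentiable (at x)"
  unfolding cov_eq
  by (intro differentiable_diff differentiable_sum differentiable_mult ballI pb_d[OF assms]
      G_d[OF assms] b_d[OF assms]) auto

lemma c_d: assumes "x \<in> U" shows "c differentiable (at x)"
proof -
  obtain i0 :: 'n where True by blast
  have "(\<lambda>y. cov_deriv a b i0 i0 y / a i0 i0 y) differentiable (at x)"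
    using a_diag_pos[OF assms, of i0]
    by (intro differentiable_divide cov_d[OF assms] a_d[OF assms]) auto
  moreover have "\<And>y. y \<in> U \<Longrightarrow> cov_deriv a b i0 i0 y / a i0 i0 y = c y"
    using cov a_diag_pos by (metis nonzero_mult_div_cancel_right order_less_irrefl)
  ultimately show ?thesis by (rule diff_transfer[OF _ openU assms])
qed

lemma dc: assumes "x \<in> U" shows "pd k c x = - \<mu> * b k x"
proof -
  have "pd k (\<lambda>y. c y * c y) x = pd k (\<lambda>y. - \<mu> * Q y) x"
    by (rule pd_cong[OF openU assms]) (simp add: cQ power2_eq_square[symmetric])
  moreover have "pd k (\<lambda>y. c y * c y) x = 2 * c x * pd k c x"
    using pd_mult[OF c_d[OF assms] c_d[OF assms]] by simp
  moreover have "pd k (\<lambda>y. - \<mu> * Q y) x = - \<mu> * (2 * c x * b k x)"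
    using pd_cmult[OF Q_d[OF assms], of k "- \<mu>"] dQ[OF assms, of k] by simp
  ultimately have "c x * (pd k c x) = c x * (- \<mu> * b k x)" by simp
  thus ?thesis using mult_left_cancel[OF c_ne[OF assms]] by blast
qed

definition ci where "ci y = c y * inverse (Q y)"
definition s where "s l y = - (ci y * b l y)"
definition su where "su i y = (\<Sum>p\<in>UNIV. iv i p y * s p y)"
definition bu where "bu i y = (\<Sum>p\<in>UNIV. iv i p y * b p y)"

lemma ci_d: assumes "x \<in> U" shows "ci differentiable (at x)"
proof -
  have "(\<lambda>y. c y * inverse (Q y)) differentiable (at x)"
    using Q_pos[OF assms] by (intro differentiable_mult c_d[OF assms] differentiable_inverse Q_d[OF assms]) auto
  thus ?thesis by (simp add: ci_def[abs_def])
qed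

lemma s_d: assumes "x \<in> U" shows "s l differentiable (at x)"
proof -
  have "(\<lambda>y. - (ci y * b l y)) differentiable (at x)"
    by (intro differentiable_minus differentiable_mult ci_d[OF assms] b_d[OF assms])
  thus ?thesis by (simp add: s_def[abs_def])
qed

lemma su_d: assumes "x \<in> U" shows "su i differentiable (at x)"
proof -
  have "(\<lambda>y. \<Sum>p\<in>UNIV. iv i p y * s p y) differentiable (at x)"
    by (intro differentiable_sum differentiable_mult ballI inv_d[OF assms] s_d[OF assms]) auto
  thus ?thesis by (simp add: su_def[abs_def])
qed

lemma cic: assumes "x \<in> U" shows "ci x * c x = - \<mu>"
  using cQ[OF assms] Q_pos[OF assms] unfolding ci_def
  by (simp add: field_simps power2_eq_square)

lemma dci: assumes "x \<in> U" shows "pd k ci x = \<mu> * b k x / Q x"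
proof -
  have "pd k ci x = pd k (\<lambda>y. c y * inverse (Q y)) x" by (simp add: ci_def[abs_def])
  also have "\<dots> = pd k c x * inverse (Q x) + c x * pd k (\<lambda>y. inverse (Q y)) x"
    using Q_pos[OF assms]
    by (intro pd_mult c_d[OF assms] differentiable_inverse Q_d[OF assms]) auto
  also have "pd k (\<lambda>y. inverse (Q y)) x = - (2 * c x * b k x) / (Q x)^2"
    using pd_inverse[OF Q_d[OF assms]] Q_pos[OF assms] dQ[OF assms] by simp
  finally have "pd k ci x = - \<mu> * b k x * inverse (Q x) + c x * (- (2 * c x * b k x) / (Q x)^2)"
    by (simp add: dc[OF assms])
  also have "\<dots> = - \<mu> * b k x / Q x - 2 * (c x)^2 * b k x / (Q x)^2"
    by (simp add: field_simps power2_eq_square)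
  also have "\<dots> = \<mu> * b k x / Q x"
    using Q_pos[OF assms] cQ[OF assms] by (simp add: field_simps power2_eq_square)
  finally show ?thesis .
qed

lemma ds: assumes "x \<in> U"
  shows "pd k (s l) x = \<mu> * a k l x - \<mu> * b k x * b l x / Q x + (\<Sum>m\<in>UNIV. G m l k x * s m x)"
proof -
  have "pd k (s l) x = pd k (\<lambda>y. - (ci y * b l y)) x" by (simp add: s_def[abs_def])
  also have "\<dots> = - (pd k ci x * b l x + ci x * pd k (b l) x)"
    by (simp add: pd_uminus differentiable_mult ci_d[OF assms] b_d[OF assms] pd_mult)
  also have "\<dots> = - (\<mu> * b k x / Q x * b l x + ci x * c x * a l k x + ci x * (\<Sum>m\<in>UNIV. G m l k x * b m x))"
    by (simp add: dci[OF assms] db[OF assms] algebra_simps)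
  also have "ci x * (\<Sum>m\<in>UNIV. G m l k x * b m x) = - (\<Sum>m\<in>UNIV. G m l k x * s m x)"
    by (simp add: s_def sum_distrib_left sum_negf[symmetric] mult_ac)
  finally have eq: "pd k (s l) x = - (\<mu> * b k x / Q x * b l x + ci x * c x * a l k x + - (\<Sum>m\<in>UNIV. G m l k x * s m x))" .
  have e2: "ci x * c x * a l k x = \<mu> * (- a k l x)" using cic[OF assms] asym[OF assms, of l k] by simp
  have e3: "\<mu> * b k x / Q x * b l x = \<mu> * b k x * b l x / Q x" by simp
  show ?thesis using eq e2 e3 by linarith
qed

end


context L begin

lemma dsu: assumes "x \<in> U"
  shows "pd k (su i) x = \<mu> * (if i = k then 1 else 0) - \<mu> * b k x * bu i x / Q x - (\<Sum>q\<in>UNIV. G i k q x * su q x)"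
proof -
  define X1 where "X1 = (\<Sum>p\<in>UNIV. \<Sum>q\<in>UNIV. iv i q x * G p k q x * s p x)"
  define X2 where "X2 = (\<Sum>p\<in>UNIV. \<Sum>q\<in>UNIV. G i k q x * iv q p x * s p x)"
  define X3 where "X3 = (\<Sum>p\<in>UNIV. \<Sum>m\<in>UNIV. iv i p x * G m p k x * s m x)"
  define X4 where "X4 = (\<Sum>p\<in>UNIV. iv i p x * a k p x)"
  define X5 where "X5 = (\<Sum>p\<in>UNIV. iv i p x * b p x)"
  have "pd k (su i) x = pd k (\<lambda>y. \<Sum>p\<in>UNIV. iv i p y * s p y) x" by (simp add: su_def[abs_def])
  also have "\<dots> = (\<Sum>p\<in>UNIV. pd k (\<lambda>y. iv i p y * s p y) x)"
    by (rule pd_sum) (auto intro!: differentiable_mult inv_d[OF assms] s_d[OF assms])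
  also have "\<dots> = (\<Sum>p\<in>UNIV. pd k (inv_metric a i p) x * s p x + iv i p x * pd k (s p) x)"
    by (rule sum.cong[OF refl], rule pd_mult[OF inv_d[OF assms] s_d[OF assms]])
  also have "\<dots> = - X1 - X2 + \<mu> * X4 - \<mu> * b k x / Q x * X5 + X3"
    unfolding X1_def X2_def X3_def X4_def X5_def
    by (simp add: dinv[OF assms] ds[OF assms] sum.distrib sum_subtractf
        sum_distrib_left sum_distrib_right algebra_simps)
  also have "X1 = X3"
  proof -
    have "X3 = (\<Sum>p\<in>UNIV. \<Sum>m\<in>UNIV. iv i p x * G m k p x * s m x)"
      unfolding X3_def by (intro sum.cong refl) (metis G_sym[OF assms])
    also have "\<dots> = X1" unfolding X1_def by (rule sum.swap)
    finally show ?thesis by simp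
  qed
  also have "X2 = (\<Sum>q\<in>UNIV. G i k q x * su q x)"
  proof -
    have "X2 = (\<Sum>q\<in>UNIV. \<Sum>p\<in>UNIV. G i k q x * iv q p x * s p x)" unfolding X2_def by (rule sum.swap)
    also have "\<dots> = (\<Sum>q\<in>UNIV. G i k q x * su q x)"
      by (simp add: su_def sum_distrib_left mult_ac)
    finally show ?thesis .
  qed
  also have "X4 = (if i = k then 1 else 0)"
    unfolding X4_def using I1[OF assms, of i k] by (simp add: asym[OF assms, of k])
  also have "X5 = bu i x" unfolding X5_def bu_def ..
  finally show ?thesis by simp
qed

lemma su_ci: "su i x = - ci x * bu i x"
  by (simp add: su_def bu_def s_def sum_distrib_left mult_ac sum_negf[symmetric])

lemma a_su: assumes "x \<in> U" shows "(\<Sum>m\<in>UNIV. a k m x * su m x) = s k x"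
proof -
  have "(\<Sum>m\<in>UNIV. a k m x * su m x) = (\<Sum>m\<in>UNIV. \<Sum>p\<in>UNIV. a k m x * iv m p x * s p x)"
    by (simp add: su_def sum_distrib_left mult_ac)
  also have "\<dots> = (\<Sum>p\<in>UNIV. (\<Sum>m\<in>UNIV. a k m x * iv m p x) * s p x)"
    by (subst sum.swap) (simp add: sum_distrib_right)
  also have "\<dots> = s k x" by (simp add: I2[OF assms])
  finally show ?thesis .
qed

lemma b_bu: "(\<Sum>m\<in>UNIV. b m x * bu m x) = Q x"
  by (simp add: bu_def Q_def sum_distrib_left mult_ac)

lemma b_su: "(\<Sum>m\<in>UNIV. su m x * b m x) = - ci x * Q x"
proof -
  have "(\<Sum>m\<in>UNIV. su m x * b m x) = - ci x * (\<Sum>m\<in>UNIV. b m x * bu m x)"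
    by (simp add: su_ci sum_distrib_left mult_ac sum_negf)
  thus ?thesis by (simp add: b_bu)
qed

lemma s_su: assumes "x \<in> U" shows "(\<Sum>m\<in>UNIV. s m x * su m x) = - \<mu>"
proof -
  have "(\<Sum>m\<in>UNIV. s m x * su m x) = ci x * ci x * (\<Sum>m\<in>UNIV. b m x * bu m x)"
    by (simp add: su_ci s_def sum_distrib_left mult_ac)
  also have "\<dots> = ci x * ci x * Q x" by (simp add: b_bu)
  also have "\<dots> = - \<mu>"
    using cic[OF assms] Q_pos[OF assms] unfolding ci_def by (simp add: field_simps)
  finally show ?thesis .
qed

definition abar where "abar i j y = a i j y / (form_norm a b y)\<^sup>2"
definition bbar where "bbar i y = b i y / (form_norm a b y)\<^sup>2"
definition S where "S k i j y = (if k = j then s i y else 0) + (if k = i then s j y else 0) - a i j y * su k y"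

lemma S_contr: "(\<Sum>k\<in>UNIV. S k i j x * f k) = s i x * f j + s j x * f i - a i j x * (\<Sum>k\<in>UNIV. su k x * f k)"
proof -
  have pt: "S k i j x * f k = (if k = j then s i x * f k else 0) + (if k = i then s j x * f k else 0) - a i j x * (su k x * f k)" for k
    by (simp add: S_def algebra_simps)
  have "(\<Sum>k\<in>UNIV. S k i j x * f k) = (\<Sum>k\<in>UNIV. (if k = j then s i x * f k else 0))
     + (\<Sum>k\<in>UNIV. (if k = i then s j x * f k else 0)) - (\<Sum>k\<in>UNIV. a i j x * (su k x * f k))"
    by (simp only: pt sum.distrib sum_subtractf)
  thus ?thesis by (simp add: sum_distrib_left[symmetric])
qed

lemma pd_overQ:
  assumes "x \<in> U" "f differentiable (at x)"
  shows "pd l (\<lambda>y. f y / (form_norm a b y)\<^sup>2) x = pd l f x / Q x + 2 * f x * s l x / Q x"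
proof -
  have "pd l (\<lambda>y. f y / (form_norm a b y)\<^sup>2) x = pd l (\<lambda>y. f y * inverse (Q y)) x"
    by (rule pd_cong[OF openU assms(1)]) (simp add: fn_sq divide_inverse)
  also have "\<dots> = pd l f x * inverse (Q x) + f x * pd l (\<lambda>y. inverse (Q y)) x"
    using Q_pos[OF assms(1)]
    by (intro pd_mult assms(2) differentiable_inverse Q_d[OF assms(1)]) auto
  also have "pd l (\<lambda>y. inverse (Q y)) x = - (2 * c x * b l x) / (Q x)^2"
    using pd_inverse[OF Q_d[OF assms(1)]] Q_pos[OF assms(1)] dQ[OF assms(1)] by simp
  finally show ?thesis
    using Q_pos[OF assms(1)] by (simp add: s_def ci_def field_simps power2_eq_square)
qed

lemma inv_abar: assumes "x \<in> U" shows "inv_metric abar k l x = Q x * iv k l x"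
proof -
  let ?Ab = "(\<chi> k l. abar k l x) :: real^'n^'n"
  let ?B = "(\<chi> k l. Q x * iv k l x) :: real^'n^'n"
  have Qn: "Q x \<noteq> 0" using Q_pos[OF assms] by simp
  have ab: "abar k l x = a k l x / Q x" for k l by (simp add: abar_def fn_sq[OF assms])
  have 1: "?Ab ** ?B = mat 1"
  proof -
    have "(?Ab ** ?B) $ k $ m = (if k = m then 1 else 0)" for k m
    proof -
      have "(?Ab ** ?B) $ k $ m = (\<Sum>l\<in>UNIV. a k l x * iv l m x)"
        using Qn by (simp add: matrix_matrix_mult_def ab)
      thus ?thesis by (simp add: I2[OF assms])
    qed
    thus ?thesis by (simp add: vec_eq_iff mat_def)
  qed
  have 2: "?B ** ?Ab = mat 1"
  proof -
    have "(?B ** ?Ab) $ k $ m = (if k = m then 1 else 0)" for k m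
    proof -
      have "(?B ** ?Ab) $ k $ m = (\<Sum>l\<in>UNIV. iv k l x * a l m x)"
        using Qn by (simp add: matrix_matrix_mult_def ab)
      thus ?thesis by (simp add: I1[OF assms])
    qed
    thus ?thesis by (simp add: vec_eq_iff mat_def)
  qed
  have inv: "invertible ?Ab" using 1 2 unfolding invertible_def by blast
  have "matrix_inv ?Ab = ?B"
  proof -
    have "matrix_inv ?Ab = matrix_inv ?Ab ** (?Ab ** ?B)" by (simp add: 1)
    also have "\<dots> = (matrix_inv ?Ab ** ?Ab) ** ?B" by (simp add: matrix_mul_assoc)
    also have "\<dots> = ?B" by (simp add: matrix_inv_props(2)[OF inv])
    finally show ?thesis .
  qed
  thus ?thesis unfolding inv_metric_def by simp
qed

lemma pd_abar: assumes "x \<in> U"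
  shows "pd l (abar i j) x = pd l (a i j) x / Q x + 2 * a i j x * s l x / Q x"
proof -
  have "abar i j = (\<lambda>y. a i j y / (form_norm a b y)\<^sup>2)" by (rule ext) (simp add: abar_def)
  thus ?thesis using pd_overQ[OF assms a_d[OF assms]] by simp
qed

lemma Gbar: assumes "x \<in> U"
  shows "christoffel abar k i j x = G k i j x + S k i j x"
proof -
  have Qn: "Q x \<noteq> 0" using Q_pos[OF assms] by simp
  have "christoffel abar k i j x = (1/2) * (\<Sum>l\<in>UNIV. (Q x * iv k l x) *
      ((pd i (a j l) x / Q x + 2 * a j l x * s i x / Q x) + (pd j (a i l) x / Q x + 2 * a i l x * s j x / Q x)
       - (pd l (a i j) x / Q x + 2 * a i j x * s l x / Q x)))"
    by (simp add: christoffel_def inv_abar[OF assms] pd_abar[OF assms])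
  also have "\<dots> = (1/2) * (\<Sum>l\<in>UNIV. iv k l x * (pd i (a j l) x + pd j (a i l) x - pd l (a i j) x))
      + (\<Sum>l\<in>UNIV. iv k l x * a l j x * s i x + iv k l x * a l i x * s j x - a i j x * (iv k l x * s l x))"
  proof -
    have pt: "(Q x * iv k l x) *
      ((pd i (a j l) x / Q x + 2 * a j l x * s i x / Q x) + (pd j (a i l) x / Q x + 2 * a i l x * s j x / Q x)
       - (pd l (a i j) x / Q x + 2 * a i j x * s l x / Q x))
      = iv k l x * (pd i (a j l) x + pd j (a i l) x - pd l (a i j) x)
        + 2 * (iv k l x * a l j x * s i x + iv k l x * a l i x * s j x - a i j x * (iv k l x * s l x))" for l
    proof -
      have "a j l x = a l j x" "a i l x = a l i x" using asym[OF assms] by auto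
      thus ?thesis using Qn by (simp add: field_simps)
    qed
    show ?thesis
      by (simp only: pt sum.distrib sum_distrib_left[symmetric] distrib_left)
  qed
  also have "(\<Sum>l\<in>UNIV. iv k l x * a l j x * s i x + iv k l x * a l i x * s j x - a i j x * (iv k l x * s l x))
      = (\<Sum>l\<in>UNIV. iv k l x * a l j x) * s i x + (\<Sum>l\<in>UNIV. iv k l x * a l i x) * s j x - a i j x * su k x"
    by (simp add: sum.distrib sum_subtractf sum_distrib_right sum_distrib_left su_def)
  also have "\<dots> = S k i j x" by (simp add: I1[OF assms] S_def)
  finally show ?thesis by (simp add: christoffel_def)
qed

lemma part2: assumes "x \<in> U" shows "cov_deriv abar bbar i j x = 0"
proof -
  have Qn: "Q x \<noteq> 0" using Q_pos[OF assms] by simp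
  have "bbar i = (\<lambda>y. b i y / (form_norm a b y)\<^sup>2)" by (rule ext) (simp add: bbar_def)
  hence pb: "pd j (bbar i) x = pd j (b i) x / Q x + 2 * b i x * s j x / Q x"
    using pd_overQ[OF assms b_d[OF assms]] by simp
  have bb: "bbar k x = b k x / Q x" for k by (simp add: bbar_def fn_sq[OF assms])
  have "cov_deriv abar bbar i j x = pd j (bbar i) x - (\<Sum>k\<in>UNIV. (G k i j x + S k i j x) * (b k x / Q x))"
    by (simp add: cov_deriv_def Gbar[OF assms] bb)
  also have "(\<Sum>k\<in>UNIV. (G k i j x + S k i j x) * (b k x / Q x))
     = ((\<Sum>k\<in>UNIV. G k i j x * b k x) + (\<Sum>k\<in>UNIV. S k i j x * b k x)) / Q x"
    by (simp add: distrib_right sum.distrib sum_divide_distrib add_divide_distrib)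
  also have "(\<Sum>k\<in>UNIV. S k i j x * b k x) = s i x * b j x + s j x * b i x - a i j x * (\<Sum>k\<in>UNIV. su k x * b k x)"
    by (rule S_contr)
  also have "(\<Sum>k\<in>UNIV. su k x * b k x) = - ci x * Q x" by (rule b_su)
  finally show ?thesis
    using Qn unfolding pb db[OF assms]
    by (simp add: s_def ci_def field_simps)
qed

lemma part3: assumes "x \<in> U" shows "form_norm abar bbar x = 1"
proof -
  have Qn: "Q x > 0" using Q_pos[OF assms] by simp
  have bb: "bbar k x = b k x / Q x" for k by (simp add: bbar_def fn_sq[OF assms])
  have "(\<Sum>i\<in>UNIV. \<Sum>j\<in>UNIV. inv_metric abar i j x * bbar i x * bbar j x)
      = (\<Sum>i\<in>UNIV. \<Sum>j\<in>UNIV. iv i j x * b i x * b j x) / Q x"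
    using Qn by (simp add: inv_abar[OF assms] bb sum_divide_distrib power2_eq_square field_simps)
  also have "\<dots> = 1" using Qn by (simp add: Q_def[symmetric])
  finally show ?thesis unfolding form_norm_def by simp
qed

end


lemma if0_mult [simp]: "(if P then (a::real) else 0) * c = (if P then a * c else 0)" by simp
lemma mult_if0 [simp]: "c * (if P then (a::real) else 0) = (if P then c * a else 0)" by simp

definition SSf :: "('n::finite \<Rightarrow> real) \<Rightarrow> ('n \<Rightarrow> real) \<Rightarrow> ('n \<Rightarrow> 'n \<Rightarrow> real) \<Rightarrow> 'n \<Rightarrow> 'n \<Rightarrow> 'n \<Rightarrow> real" where
  "SSf s su A i l j = (if i = j then s l else 0) + (if i = l then s j else 0) - A l j * su i"

definition NSf :: "('n::finite \<Rightarrow> 'n \<Rightarrow> real) \<Rightarrow> ('n \<Rightarrow> 'n \<Rightarrow> real) \<Rightarrow> ('n \<Rightarrow> 'n \<Rightarrow> real) \<Rightarrow> 'n \<Rightarrow> 'n \<Rightarrow> 'n \<Rightarrow> 'n \<Rightarrow> real" where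
  "NSf T Tu A k i l j = (if i = j then T k l else 0) + (if i = l then T k j else 0) - A l j * Tu k i"

lemma claim1:
  fixes G :: "'n::finite \<Rightarrow> 'n \<Rightarrow> 'n \<Rightarrow> real" and A T Tu :: "'n \<Rightarrow> 'n \<Rightarrow> real" and s su :: "'n \<Rightarrow> real"
  shows "(if i = j then T k l + (\<Sum>m\<in>UNIV. G m k l * s m) else 0) + (if i = l then T k j + (\<Sum>m\<in>UNIV. G m k j * s m) else 0)
        - ((\<Sum>m\<in>UNIV. G m k l * A m j + G m k j * A l m) * su i + A l j * (Tu k i - (\<Sum>q\<in>UNIV. G i k q * su q)))
      = NSf T Tu A k i l j
        - (\<Sum>m\<in>UNIV. G i k m * SSf s su A m l j) + (\<Sum>m\<in>UNIV. G m k l * SSf s su A i m j) + (\<Sum>m\<in>UNIV. G m k j * SSf s su A i l m)"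
proof -
  have e1: "(\<Sum>m\<in>UNIV. G i k m * SSf s su A m l j) = G i k j * s l + G i k l * s j - A l j * (\<Sum>m\<in>UNIV. G i k m * su m)"
    by (simp add: SSf_def algebra_simps sum.distrib sum_subtractf sum_distrib_left)
  have e2: "(\<Sum>m\<in>UNIV. G m k l * SSf s su A i m j) = (if i = j then (\<Sum>m\<in>UNIV. G m k l * s m) else 0) + G i k l * s j - su i * (\<Sum>m\<in>UNIV. G m k l * A m j)"
    by (simp add: SSf_def algebra_simps sum.distrib sum_subtractf sum_distrib_left)
  have e3: "(\<Sum>m\<in>UNIV. G m k j * SSf s su A i l m) = G i k j * s l + (if i = l then (\<Sum>m\<in>UNIV. G m k j * s m) else 0) - su i * (\<Sum>m\<in>UNIV. G m k j * A l m)"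
    by (simp add: SSf_def algebra_simps sum.distrib sum_subtractf sum_distrib_left)
  show ?thesis
    unfolding e1 e2 e3 NSf_def sum.distrib
    by (cases "i = j"; cases "i = l") (simp_all add: algebra_simps)
qed

lemma claim2:
  fixes G SS :: "'n::finite \<Rightarrow> 'n \<Rightarrow> 'n \<Rightarrow> real" and dS NS :: "'n \<Rightarrow> 'n \<Rightarrow> 'n \<Rightarrow> 'n \<Rightarrow> real"
  assumes sym: "\<And>m. G m l k = G m k l"
    and h1: "dS k i l j = NS k i l j - (\<Sum>m\<in>UNIV. G i k m * SS m l j) + (\<Sum>m\<in>UNIV. G m k l * SS i m j) + (\<Sum>m\<in>UNIV. G m k j * SS i l m)"
    and h2: "dS l i k j = NS l i k j - (\<Sum>m\<in>UNIV. G i l m * SS m k j) + (\<Sum>m\<in>UNIV. G m l k * SS i m j) + (\<Sum>m\<in>UNIV. G m l j * SS i k m)"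
  shows "(dG1 + dS k i l j) - (dG2 + dS l i k j)
     + (\<Sum>m\<in>UNIV. (G i k m + SS i k m) * (G m l j + SS m l j) - (G i l m + SS i l m) * (G m k j + SS m k j))
   = (dG1 - dG2 + (\<Sum>m\<in>UNIV. G i k m * G m l j - G i l m * G m k j)) + (NS k i l j - NS l i k j)
     + (\<Sum>m\<in>UNIV. SS i k m * SS m l j - SS i l m * SS m k j)"
  unfolding h1 h2 sym
  by (simp add: sum.distrib sum_subtractf algebra_simps)

lemma SS_prod:
  fixes A :: "'n::finite \<Rightarrow> 'n \<Rightarrow> real" and s su :: "'n \<Rightarrow> real"
  assumes Asu: "\<And>k. (\<Sum>m\<in>UNIV. A k m * su m) = s k" and Ns: "(\<Sum>m\<in>UNIV. s m * su m) = N"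
  shows "(\<Sum>m\<in>UNIV. SSf s su A i k m * SSf s su A m l j)
     = (if i = j then s k * s l else 0) + (if i = l then s k * s j else 0)
       + (if i = k then 2 * (s j * s l) - A l j * N else 0) - A k j * s l * su i - A k l * s j * su i"
proof -
  have f1: "(\<Sum>m\<in>UNIV. SSf s su A i k m * X m) = s k * X i + (if i = k then (\<Sum>m\<in>UNIV. s m * X m) else 0)
      - su i * (\<Sum>m\<in>UNIV. A k m * X m)" for X
    by (cases "i = k") (simp_all add: SSf_def algebra_simps sum.distrib sum_subtractf sum_distrib_left)
  have f2: "(\<Sum>m\<in>UNIV. s m * SSf s su A m l j) = 2 * (s j * s l) - A l j * N"
  proof -
    have "(\<Sum>m\<in>UNIV. s m * SSf s su A m l j) = s j * s l + s l * s j - A l j * (\<Sum>m\<in>UNIV. s m * su m)"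
      by (simp add: SSf_def algebra_simps sum.distrib sum_subtractf sum_distrib_left)
    thus ?thesis using Ns by simp
  qed
  have f3: "(\<Sum>m\<in>UNIV. A k m * SSf s su A m l j) = A k j * s l + A k l * s j - A l j * s k"
  proof -
    have "(\<Sum>m\<in>UNIV. A k m * SSf s su A m l j) = A k j * s l + A k l * s j - A l j * (\<Sum>m\<in>UNIV. A k m * su m)"
      by (simp add: SSf_def algebra_simps sum.distrib sum_subtractf sum_distrib_left)
    thus ?thesis using Asu by simp
  qed
  show ?thesis unfolding f1 f2 f3
    by (cases "i = k") (simp_all add: SSf_def algebra_simps)
qed

lemma claim3:
  fixes A T Tu :: "'n::finite \<Rightarrow> 'n \<Rightarrow> real" and s su b bu :: "'n \<Rightarrow> real"
  assumes Asym: "\<And>i j. A i j = A j i"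
    and Tdef: "\<And>k l. T k l = \<mu> * A k l - \<mu> * b k * b l / Q"
    and Tudef: "\<And>k i. Tu k i = \<mu> * (if i = k then 1 else 0) - \<mu> * b k * bu i / Q"
    and sdef: "\<And>k. s k = - (r * b k)" and sudef: "\<And>i. su i = - (r * bu i)"
    and Asu: "\<And>k. (\<Sum>m\<in>UNIV. A k m * su m) = s k" and Ns: "(\<Sum>m\<in>UNIV. s m * su m) = - \<mu>"
    and rQ: "\<mu> = - (r * r * Q)" and Qn: "Q \<noteq> 0"
  shows "NSf T Tu A k i l j - NSf T Tu A l i k j
      + (\<Sum>m\<in>UNIV. SSf s su A i k m * SSf s su A m l j - SSf s su A i l m * SSf s su A m k j)
    = \<mu> * ((if i = l then A k j else 0) - (if i = k then A l j else 0))"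
proof -
  have "(\<Sum>m\<in>UNIV. SSf s su A i k m * SSf s su A m l j - SSf s su A i l m * SSf s su A m k j)
     = (\<Sum>m\<in>UNIV. SSf s su A i k m * SSf s su A m l j) - (\<Sum>m\<in>UNIV. SSf s su A i l m * SSf s su A m k j)"
    by (rule sum_subtractf)
  also have "\<dots> = ((if i = j then s k * s l else 0) + (if i = l then s k * s j else 0)
       + (if i = k then 2 * (s j * s l) - A l j * (- \<mu>) else 0) - A k j * s l * su i - A k l * s j * su i)
     - ((if i = j then s l * s k else 0) + (if i = k then s l * s j else 0)
       + (if i = l then 2 * (s j * s k) - A k j * (- \<mu>) else 0) - A l j * s k * su i - A l k * s j * su i)"
    by (simp only: SS_prod[OF Asu Ns])
  finally have e: "(\<Sum>m\<in>UNIV. SSf s su A i k m * SSf s su A m l j - SSf s su A i l m * SSf s su A m k j) = \<dots>" .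
  have Alk: "A l k = A k l" by (rule Asym)
  show ?thesis unfolding e NSf_def Tdef Tudef sdef sudef Alk
    using Qn
    by (cases "i = j"; cases "i = l"; cases "i = k") (simp_all add: rQ field_simps)
qed



lemma pd_if0:
  fixes f :: "real^'n::finite \<Rightarrow> real"
  shows "pd k (\<lambda>y. if P then f y else 0) x = (if P then pd k f x else 0)"
  by (cases P) (simp_all add: pd_const)

lemma diff_if0:
  fixes f :: "real^'n::finite \<Rightarrow> real"
  assumes "f differentiable (at x)"
  shows "(\<lambda>y. if P then f y else 0) differentiable (at x)"
  using assms by (cases P) simp_all

context L begin

definition Tc where "Tc k l x = \<mu> * a k l x - \<mu> * b k x * b l x / Q x"
definition Tuc where "Tuc k i x = \<mu> * (if i = k then 1 else 0) - \<mu> * b k x * bu i x / Q x"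

abbreviation SS where "SS x \<equiv> SSf (\<lambda>m. s m x) (\<lambda>m. su m x) (\<lambda>p q. a p q x)"
abbreviation NS where "NS x \<equiv> NSf (\<lambda>k l. Tc k l x) (\<lambda>k i. Tuc k i x) (\<lambda>p q. a p q x)"

lemma S_is: "S i l j x = SS x i l j"
  by (simp add: S_def SSf_def)

lemma S_fun: "S i l j = (\<lambda>y. (if i = j then s l y else 0) + (if i = l then s j y else 0) - a l j y * su i y)"
  by (rule ext) (simp add: S_def)

lemma S_d: assumes "x \<in> U" shows "S i l j differentiable (at x)"
  unfolding S_fun
  by (intro differentiable_add differentiable_diff differentiable_mult diff_if0 s_d[OF assms]
      a_d[OF assms] su_d[OF assms])

lemma pdS: assumes "x \<in> U"
  shows "pd k (S i l j) x = (if i = j then pd k (s l) x else 0) + (if i = l then pd k (s j) x else 0)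
     - (pd k (a l j) x * su i x + a l j x * pd k (su i) x)"
proof -
  have d1: "(\<lambda>y. if i = j then s l y else 0) differentiable (at x)" by (intro diff_if0 s_d[OF assms])
  have d2: "(\<lambda>y. if i = l then s j y else 0) differentiable (at x)" by (intro diff_if0 s_d[OF assms])
  have d3: "(\<lambda>y. a l j y * su i y) differentiable (at x)" by (intro differentiable_mult a_d[OF assms] su_d[OF assms])
  show ?thesis unfolding S_fun
    by (simp add: pd_diff[OF differentiable_add[OF d1 d2] d3] pd_add[OF d1 d2] pd_if0
        pd_mult[OF a_d[OF assms] su_d[OF assms]])
qed

lemma ds': assumes "x \<in> U" shows "pd k (s l) x = Tc k l x + (\<Sum>m\<in>UNIV. G m k l x * s m x)"
proof -
  have "(\<Sum>m\<in>UNIV. G m l k x * s m x) = (\<Sum>m\<in>UNIV. G m k l x * s m x)"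
    by (intro sum.cong refl) (metis G_sym[OF assms])
  thus ?thesis using ds[OF assms, of k l] by (simp add: Tc_def)
qed

lemma dsu': assumes "x \<in> U" shows "pd k (su i) x = Tuc k i x - (\<Sum>q\<in>UNIV. G i k q x * su q x)"
  using dsu[OF assms, of k i] by (simp add: Tuc_def)

lemma h1: assumes "x \<in> U"
  shows "pd k (S i l j) x = NS x k i l j - (\<Sum>m\<in>UNIV. G i k m x * SS x m l j)
      + (\<Sum>m\<in>UNIV. G m k l x * SS x i m j) + (\<Sum>m\<in>UNIV. G m k j x * SS x i l m)"
proof -
  have "pd k (S i l j) x = (if i = j then Tc k l x + (\<Sum>m\<in>UNIV. G m k l x * s m x) else 0)
     + (if i = l then Tc k j x + (\<Sum>m\<in>UNIV. G m k j x * s m x) else 0)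
     - ((\<Sum>m\<in>UNIV. G m k l x * a m j x + G m k j x * a l m x) * su i x
        + a l j x * (Tuc k i x - (\<Sum>q\<in>UNIV. G i k q x * su q x)))"
    by (simp only: pdS[OF assms] ds'[OF assms] dsu'[OF assms] compat[OF assms])
  also have "\<dots> = NS x k i l j - (\<Sum>m\<in>UNIV. G i k m x * SS x m l j)
      + (\<Sum>m\<in>UNIV. G m k l x * SS x i m j) + (\<Sum>m\<in>UNIV. G m k j x * SS x i l m)"
    by (rule claim1)
  finally show ?thesis .
qed

lemma pdGbar: assumes "x \<in> U"
  shows "pd k (christoffel abar i l j) x = pd k (christoffel a i l j) x + pd k (S i l j) x"
proof -
  have "pd k (christoffel abar i l j) x = pd k (\<lambda>y. christoffel a i l j y + S i l j y) x"
    by (rule pd_cong[OF openU assms]) (simp add: Gbar)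
  also have "\<dots> = pd k (christoffel a i l j) x + pd k (S i l j) x"
    by (rule pd_add[OF G_d[OF assms] S_d[OF assms]])
  finally show ?thesis .
qed

lemma riem_bar: assumes "x \<in> U"
  shows "riem_tensor abar i j k l x = riem_tensor a i j k l x
     + (NS x k i l j - NS x l i k j + (\<Sum>m\<in>UNIV. SS x i k m * SS x m l j - SS x i l m * SS x m k j))"
proof -
  have "riem_tensor abar i j k l x = (pd k (christoffel a i l j) x + pd k (S i l j) x)
      - (pd l (christoffel a i k j) x + pd l (S i k j) x)
      + (\<Sum>m\<in>UNIV. (G i k m x + SS x i k m) * (G m l j x + SS x m l j) - (G i l m x + SS x i l m) * (G m k j x + SS x m k j))"
    by (simp add: riem_tensor_def pdGbar[OF assms] Gbar[OF assms] S_is)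
  also have "\<dots> = (pd k (christoffel a i l j) x - pd l (christoffel a i k j) x
      + (\<Sum>m\<in>UNIV. G i k m x * G m l j x - G i l m x * G m k j x))
      + (NS x k i l j - NS x l i k j) + (\<Sum>m\<in>UNIV. SS x i k m * SS x m l j - SS x i l m * SS x m k j)"
    by (rule claim2[where dS = "\<lambda>k i l j. pd k (S i l j) x"]) (auto intro: G_sym[OF assms] h1[OF assms])
  finally show ?thesis by (simp add: riem_tensor_def)
qed

lemma E_val: assumes "x \<in> U"
  shows "NS x k i l j - NS x l i k j + (\<Sum>m\<in>UNIV. SS x i k m * SS x m l j - SS x i l m * SS x m k j)
    = \<mu> * ((if i = l then a k j x else 0) - (if i = k then a l j x else 0))"
proof (rule claim3)
  show "\<And>i j. a i j x = a j i x" using asym[OF assms] by blast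
  show "\<And>k l. Tc k l x = \<mu> * a k l x - \<mu> * b k x * b l x / Q x" by (simp add: Tc_def)
  show "\<And>k i. Tuc k i x = \<mu> * (if i = k then 1 else 0) - \<mu> * b k x * bu i x / Q x" by (simp add: Tuc_def)
  show "\<And>k. s k x = - (ci x * b k x)" by (simp add: s_def)
  show "\<And>i. su i x = - (ci x * bu i x)" by (simp add: su_ci)
  show "\<And>k. (\<Sum>m\<in>UNIV. a k m x * su m x) = s k x" by (rule a_su[OF assms])
  show "(\<Sum>m\<in>UNIV. s m x * su m x) = - \<mu>" by (rule s_su[OF assms])
  show "\<mu> = - (ci x * ci x * Q x)"
    using cic[OF assms] Q_pos[OF assms] unfolding ci_def by (simp add: field_simps)
  show "Q x \<noteq> 0" using Q_pos[OF assms] by simp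
qed

end


context L begin

lemma part1:
  assumes x: "x \<in> U"
    and curvx: "riem_curv a i k x y = \<mu> * (alpha_sq a x y * (if i = k then 1 else 0) - y$i * lower a x y k)"
  shows "riem_curv abar i k x y = 0"
proof -
  have pt: "riem_tensor abar i j k l x * y$j * y$l = riem_tensor a i j k l x * y$j * y$l
      + \<mu> * ((if i = l then a k j x else 0) * y$j * y$l) - \<mu> * ((if i = k then a l j x else 0) * y$j * y$l)" for j l
    by (simp only: riem_bar[OF x] E_val[OF x]) (simp add: algebra_simps)
  have "riem_curv abar i k x y = riem_curv a i k x y
      + \<mu> * (\<Sum>j\<in>UNIV. \<Sum>l\<in>UNIV. (if i = l then a k j x else 0) * y$j * y$l)
      - \<mu> * (\<Sum>j\<in>UNIV. \<Sum>l\<in>UNIV. (if i = k then a l j x else 0) * y$j * y$l)"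
    unfolding riem_curv_def pt
    by (simp only: sum.distrib sum_subtractf sum_distrib_left)
  also have "(\<Sum>j\<in>UNIV. \<Sum>l\<in>UNIV. (if i = l then a k j x else 0) * y$j * y$l) = y$i * lower a x y k"
    by (simp add: lower_def sum_distrib_left mult_ac)
  also have "(\<Sum>j\<in>UNIV. \<Sum>l\<in>UNIV. (if i = k then a l j x else 0) * y$j * y$l) = alpha_sq a x y * (if i = k then 1 else 0)"
  proof (cases "i = k")
    case True
    have "(\<Sum>j\<in>UNIV. \<Sum>l\<in>UNIV. a l j x * y$j * y$l) = alpha_sq a x y"
      unfolding alpha_sq_def by (subst sum.swap) (simp add: mult_ac)
    thus ?thesis using True by simp
  qed simp
  finally show ?thesis using curvx by (simp add: algebra_simps)
qed

lemma abar_eq: "abar = (\<lambda>i j x. a i j x / (form_norm a b x)\<^sup>2)"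
  by (intro ext) (simp add: abar_def)
lemma bbar_eq: "bbar = (\<lambda>i x. b i x / (form_norm a b x)\<^sup>2)"
  by (intro ext) (simp add: bbar_def)

end

theorem lemma3p4:
  fixes U :: "(real^'n::finite) set"
    and a :: "'n \<Rightarrow> 'n \<Rightarrow> real^'n \<Rightarrow> real"
    and b :: "'n \<Rightarrow> real^'n \<Rightarrow> real"
    and c :: "real^'n \<Rightarrow> real"
    and \<mu> \<kappa> :: real
  assumes metric: "riem_metric U a"
    and smooth_b: "\<forall>i. smooth_on U (b i)"
    and nonzero: "\<forall>x\<in>U. form_norm a b x > 0"
    and curv: "\<forall>x\<in>U. \<forall>y. \<forall>i k. riem_curv a i k x y =
                 \<mu> * (alpha_sq a x y * (if i = k then 1 else 0) - y$i * lower a x y k)"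
    and cov: "\<forall>x\<in>U. \<forall>i j. cov_deriv a b i j x = c x * a i j x"
    and cc: "\<forall>x\<in>U. (c x)\<^sup>2 = \<kappa> - \<mu> * (form_norm a b x)\<^sup>2"
    and mu_neg: "\<mu> < 0"
    and kappa0: "\<kappa> = 0"
  defines "abar \<equiv> (\<lambda>i j x. a i j x / (form_norm a b x)\<^sup>2)"
    and "bbar \<equiv> (\<lambda>i x. b i x / (form_norm a b x)\<^sup>2)"
  shows "(\<forall>x\<in>U. \<forall>y. \<forall>i k. riem_curv abar i k x y = 0)
       \<and> (\<forall>x\<in>U. \<forall>i j. cov_deriv abar bbar i j x = 0)
       \<and> (\<forall>x\<in>U. form_norm abar bbar x = 1)"
proof -
  have LL: "L U a b c \<mu>"
    unfolding L_def using metric smooth_b nonzero cov cc mu_neg kappa0 by simp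
  have ea: "abar = L.abar a b" unfolding abar_def L.abar_eq[OF LL] ..
  have eb: "bbar = L.bbar a b" unfolding bbar_def L.bbar_eq[OF LL] ..
  show ?thesis unfolding ea eb
    using L.part1[OF LL] L.part2[OF LL] L.part3[OF LL] curv by blast
qed


end
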